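(* (a) In Case I, there exist $\delta,\beta_0,c_2>0$ such that, setting $B_{l,\beta}=\,]-2\beta^{1/\alpha},-\beta^{1/\alpha}[\times]-\delta,\delta[$, for every $0<\beta\le\beta_0$ one has $\frac{\partial h_0}{\partial x_1}\le -c_2\beta^{1-1/\alpha}$ on $B_{l,\beta}$. (b) In Case II, there exist $\theta_0\in\,]0,\pi/2[$ and $c_2,\beta_0>0$ such that, setting $B_{p,\beta}=\{(x_1,x_2)\in\mathbb{R}^2:\ \beta^{1/\alpha}\le\rho\le2\beta^{1/\alpha},\ \pi-\theta_0\le\theta\le\pi+\theta_0\}$ (where $(\rho,\theta)$ are polar coordinates of $(x_1,x_2)$), for every $0<\beta\le\beta_0$ one has $\frac{\partial h_0}{\partial x_1}\le-c_2\beta^{1-1/\alpha}$ on $B_{p,\beta}$.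
   Context: Let $\Omega\subset\mathbb{R}^2$ be a bounded open set with regular boundary, $0\in\Omega$, and $h_0\in C^1(\bar\Omega)$, $h_0\ge0$, $\min_\Omega h_0=h_0(0)=0$. Case I (line contact): $h_0(0,x_2)=0$ whenever $(0,x_2)\in\Omega$, $h_0(x_1,x_2)>0$ for $x_1\neq0$, and there exist $\alpha\ge1$, a neighborhood $W$ of $0$ and a regular function $h_1>0$ on $\bar W$ with $h_0(x_1,x_2)=|x_1|^\alpha h_1(x_1,x_2)$ on $W$. Case II (point contact): $h_0(x)>0$ for $x\in\Omega\setminus\{0\}$, and there exist $\alpha\ge1$, a neighborhood $W$ of $0$ and a regular $h_1>0$ on $\bar W$ with $h_0(x)=|x|^\alpha h_1(x)$ on $W$. *)

theory Defs
  imports "HOL-Analysis.Analysis"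
begin

definition C1_closure :: "(real \<times> real) set \<Rightarrow> (real \<times> real \<Rightarrow> real) \<Rightarrow> bool" where
  "C1_closure S f \<longleftrightarrow> continuous_on (closure S) f \<and>
     (\<exists>g. continuous_on (closure S) g \<and>
          (\<forall>x\<in>S. (f has_derivative (\<lambda>v. g x \<bullet> v)) (at x)))"

definition C1_boundary :: "(real \<times> real) set \<Rightarrow> bool" where
  "C1_boundary \<Omega> \<longleftrightarrow> (\<forall>p\<in>frontier \<Omega>. \<exists>U \<phi> g. open U \<and> p \<in> U \<and>
     continuous_on U g \<and> (\<forall>x\<in>U. (\<phi> has_derivative (\<lambda>v. g x \<bullet> v)) (at x)) \<and>
     (\<forall>x\<in>U. g x \<noteq> 0) \<and> \<Omega> \<inter> U = {x\<in>U. \<phi> x < 0})"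

definition partial1 :: "(real \<times> real \<Rightarrow> real) \<Rightarrow> real \<times> real \<Rightarrow> real" where
  "partial1 h x = deriv (\<lambda>t. h (t, snd x)) (fst x)"

definition Bp :: "real \<Rightarrow> real \<Rightarrow> real \<Rightarrow> (real \<times> real) set" where
  "Bp \<alpha> \<theta>0 \<beta> = {x. \<beta> powr (1/\<alpha>) \<le> norm x \<and> norm x \<le> 2 * \<beta> powr (1/\<alpha>) \<and>
      (\<exists>\<theta>. pi - \<theta>0 \<le> \<theta> \<and> \<theta> \<le> pi + \<theta>0 \<and> x = (norm x * cos \<theta>, norm x * sin \<theta>))}"

definition Bl :: "real \<Rightarrow> real \<Rightarrow> real \<Rightarrow> (real \<times> real) set" where
  "Bl \<alpha> \<delta> \<beta> = {x. -2 * \<beta> powr (1/\<alpha>) < fst x \<and> fst x < - (\<beta> powr (1/\<alpha>)) \<and>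
      -\<delta> < snd x \<and> snd x < \<delta>}"

end

theory Submission
  imports Defs
begin



lemma partial_deriv_h1:
  assumes "(h1 has_derivative (\<lambda>v. G \<bullet> v)) (at (a::real, b::real))"
  shows "((\<lambda>t. h1 (t, b)) has_real_derivative fst G) (at a)"
proof -
  have p: "((\<lambda>t. (t, b)) has_derivative (\<lambda>s. (s, 0))) (at a)"
    by (auto intro!: derivative_eq_intros)
  have "((\<lambda>t. h1 (t, b)) has_derivative (\<lambda>s. G \<bullet> (s, 0))) (at a)"
    using has_derivative_compose[OF p, of h1 "\<lambda>v. G \<bullet> v"] assms by (simp add: o_def)
  moreover have "(\<lambda>s. G \<bullet> (s, 0)) = (\<lambda>s. fst G * s)"
    by (cases G) (auto simp: inner_Pair)
  ultimately show ?thesis by (simp add: has_field_derivative_def)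
qed

lemma local_bounds:
  assumes "open W" "(0,0) \<in> W" "C1_closure W h1" "\<forall>x\<in>closure W. h1 x > 0"
  obtains r m M g where "r>0" "m>0" "M>0" "ball 0 r \<subseteq> W"
    "\<forall>x\<in>ball 0 r. h1 x \<ge> m \<and> \<bar>fst (g x)\<bar> \<le> M"
    "\<forall>x\<in>W. (h1 has_derivative (\<lambda>v. g x \<bullet> v)) (at x)"
proof -
  obtain g where gc: "continuous_on (closure W) g" and gd: "\<forall>x\<in>W. (h1 has_derivative (\<lambda>v. g x \<bullet> v)) (at x)"
    using assms(3) unfolding C1_closure_def by blast
  have int: "(0,0) \<in> interior (closure W)"
    using assms(1,2) by (metis interior_maximal closure_subset interior_open subsetD)
  have cg: "continuous (at (0,0)) g" by (rule continuous_on_interior[OF gc int])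
  have ch: "continuous (at (0,0)) h1"
    using gd assms(2) has_derivative_continuous by blast
  have h0p: "h1 (0,0) > 0" using assms(2,4) closure_subset by blast
  obtain d1 where d1: "d1>0" "\<forall>x. dist x (0,0) < d1 \<longrightarrow> dist (h1 x) (h1 (0,0)) < h1 (0,0)/2"
    using ch h0p unfolding continuous_at_eps_delta by (meson half_gt_zero)
  obtain d2 where d2: "d2>0" "\<forall>x. dist x (0,0) < d2 \<longrightarrow> dist (g x) (g (0,0)) < 1"
    using cg unfolding continuous_at_eps_delta by (meson zero_less_one)
  obtain d3 where d3: "d3>0" "ball (0,0) d3 \<subseteq> W" using assms(1,2) open_contains_ball by blast
  define r where "r = min d1 (min d2 d3)"
  have r: "r > 0" using d1 d2 d3 by (simp add: r_def)
  have "\<forall>x\<in>ball 0 r. h1 x \<ge> h1 (0,0)/2 \<and> \<bar>fst (g x)\<bar> \<le> norm (g (0,0)) + 1"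
  proof
    fix x :: "real \<times> real" assume x: "x \<in> ball 0 r"
    hence dx: "dist x (0,0) < d1" "dist x (0,0) < d2" by (auto simp: r_def dist_commute zero_prod_def)
    have "dist (h1 x) (h1 (0,0)) < h1 (0,0)/2" using d1(2) dx(1) by blast
    hence "h1 x \<ge> h1 (0,0)/2" unfolding dist_real_def by linarith
    moreover have "\<bar>fst (g x)\<bar> \<le> norm (g x)"
      by (metis norm_fst_le prod.collapse real_norm_def)
    moreover have "norm (g x) \<le> norm (g (0,0)) + 1"
    proof -
      have "dist (g x) (g (0,0)) < 1" using d2(2) dx(2) by blast
      thus ?thesis using norm_triangle_ineq2[of "g x" "g (0,0)"] by (simp add: dist_norm)
    qed
    ultimately show "h1 x \<ge> h1 (0,0)/2 \<and> \<bar>fst (g x)\<bar> \<le> norm (g (0,0)) + 1" by linarith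
  qed
  moreover have "ball 0 r \<subseteq> W" using d3 by (auto simp: r_def zero_prod_def)
  moreover have "norm (g (0,0)) + 1 > 0" by (simp add: add_nonneg_pos)
  ultimately show ?thesis using that[of r "h1 (0,0)/2" "norm (g (0,0)) + 1" g] r h0p gd by simp
qed

lemma norm_pair_le: "norm ((a::real), (b::real)) \<le> \<bar>a\<bar> + \<bar>b\<bar>"
proof -
  have "norm (a, b) \<le> norm (a, 0::real) + norm (0::real, b)"
    using norm_triangle_ineq[of "(a, 0::real)" "(0::real, b)"] by simp
  thus ?thesis by (simp add: norm_Pair)
qed

lemma caseI:
  fixes h0 h1 :: "real \<times> real \<Rightarrow> real" and \<alpha> :: real
  assumes a1: "1 \<le> \<alpha>" and W: "open W" "(0,0) \<in> W" "C1_closure W h1"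
    "\<forall>x\<in>closure W. h1 x > 0"
    and eq: "\<forall>x1 x2. (x1, x2) \<in> W \<longrightarrow> h0 (x1, x2) = \<bar>x1\<bar> powr \<alpha> * h1 (x1, x2)"
  shows "\<exists>\<delta> \<beta>0 c2. \<delta> > 0 \<and> \<beta>0 > 0 \<and> c2 > 0 \<and>
               (\<forall>\<beta>. 0 < \<beta> \<and> \<beta> \<le> \<beta>0 \<longrightarrow>
                  (\<forall>x\<in>Bl \<alpha> \<delta> \<beta>. partial1 h0 x \<le> - c2 * \<beta> powr (1 - 1/\<alpha>)))"
proof -
  obtain r m M g where r: "r>0" and m: "m>0" and M: "M>0" and rW: "ball 0 r \<subseteq> W"
    and bd: "\<forall>x\<in>ball 0 r. h1 x \<ge> m \<and> \<bar>fst (g x)\<bar> \<le> M"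
    and gd: "\<forall>x\<in>W. (h1 has_derivative (\<lambda>v. g x \<bullet> v)) (at x)"
    using local_bounds[OF W] by blast
  define s where "s = min (r/4) (\<alpha>*m/(4*M))"
  have s: "s > 0" using r m M a1 by (simp add: s_def)
  define \<beta>0 where "\<beta>0 = s powr \<alpha>"
  have b0: "\<beta>0 > 0" using s by (simp add: \<beta>0_def)
  define c2 where "c2 = \<alpha>*m/2"
  have c2: "c2 > 0" using a1 m by (simp add: c2_def)
  have main: "partial1 h0 x \<le> - c2 * \<beta> powr (1 - 1/\<alpha>)"
    if \<beta>: "0 < \<beta>" "\<beta> \<le> \<beta>0" and x: "x \<in> Bl \<alpha> (r/4) \<beta>" for \<beta> x
  proof -
    obtain x1 x2 where xx: "x = (x1, x2)" by (cases x)
    define b where "b = \<beta> powr (1/\<alpha>)"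
    have bpos: "b > 0" using \<beta> by (simp add: b_def)
    have "b \<le> \<beta>0 powr (1/\<alpha>)" unfolding b_def using \<beta> a1 by (intro powr_mono2) auto
    also have "\<beta>0 powr (1/\<alpha>) = s" using a1 s by (simp add: \<beta>0_def powr_powr)
    finally have bs: "b \<le> s" .
    have x1: "-2*b < x1" "x1 < -b" and x2: "\<bar>x2\<bar> < r/4"
      using x by (auto simp: Bl_def xx b_def)
    define a where "a = -x1"
    have a: "b < a" "a < 2*b" using x1 by (auto simp: a_def)
    have apos: "a > 0" using a bpos by linarith
    have "a \<le> 2 * s" using a bs by linarith
    hence "a * M \<le> 2 * s * M" using M by (intro mult_right_mono) auto
    also have "2 * s * M \<le> 2 * (\<alpha>*m/(4*M)) * M" using M unfolding s_def
      by (intro mult_right_mono) auto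
    also have "2 * (\<alpha>*m/(4*M)) * M = \<alpha>*m/2" using M by (simp add: field_simps)
    finally have aM: "a * M \<le> \<alpha>*m/2" .
    have ar: "a < r/2" using a bs s_def by linarith
    define S :: "real set" where "S = {t. (t, x2) \<in> ball 0 r \<and> t < 0}"
    have Sopen: "open S" unfolding S_def
    proof -
      have "open ((\<lambda>t. (t, x2)) -` ball 0 r)"
        by (rule open_vimage) (auto intro!: continuous_intros)
      moreover have "open {t::real. t < 0}" by (rule open_Collect_less) (auto intro: continuous_intros)
      ultimately have op: "open ((\<lambda>t. (t, x2)) -` ball 0 r \<inter> {t::real. t < 0})" by (rule open_Int)
      have eqs: "{t::real. (t, x2) \<in> ball 0 r \<and> t < 0} = (\<lambda>t. (t, x2)) -` ball 0 r \<inter> {t::real. t < 0}" by auto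
      show "open {t::real. (t, x2) \<in> ball 0 r \<and> t < 0}" using op by (simp only: eqs)
    qed
    have xb: "(x1, x2) \<in> ball 0 r"
    proof -
      have "\<bar>x1\<bar> = a" using apos by (simp add: a_def)
      hence "norm (x1, x2) < r" using norm_pair_le[of x1 x2] ar x2 by linarith
      thus ?thesis by simp
    qed
    have x1S: "x1 \<in> S" using xb apos by (simp add: S_def a_def)
    have hd: "((\<lambda>t. h1 (t, x2)) has_real_derivative fst (g (x1,x2))) (at x1)"
      using partial_deriv_h1 gd xb rW by blast
    have pd: "((\<lambda>t. (-t) powr \<alpha>) has_real_derivative \<alpha> * (-x1) powr (\<alpha> - 1) * (-1)) (at x1)"
      using DERIV_fun_powr[of "\<lambda>t. -t" "-1" x1 \<alpha>] apos
      by (auto simp: a_def intro!: derivative_eq_intros)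
    define D where "D = \<alpha> * (-x1) powr (\<alpha> - 1) * (-1) * h1 (x1,x2) + (-x1) powr \<alpha> * fst (g (x1,x2))"
    have "((\<lambda>t. (-t) powr \<alpha> * h1 (t, x2)) has_real_derivative D) (at x1)"
      using DERIV_mult[OF pd hd] unfolding D_def by (simp add: mult.commute)
    hence "((\<lambda>t. h0 (t, x2)) has_real_derivative D) (at x1)"
      by (rule has_field_derivative_transform_within_open[OF _ Sopen x1S])
         (use eq rW in \<open>auto simp: S_def\<close>)
    hence pD: "partial1 h0 x = D" by (simp add: partial1_def xx DERIV_imp_deriv)
    define P where "P = a powr (\<alpha> - 1)"
    have Ppos: "P > 0" using apos by (simp add: P_def)
    have aP: "a powr \<alpha> = a * P"
    proof -
      have "a powr \<alpha> = a powr (1 + (\<alpha> - 1))" by simp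
      also have "\<dots> = a powr 1 * a powr (\<alpha> - 1)" by (rule powr_add)
      finally show ?thesis using apos by (simp add: P_def)
    qed
    have h1m: "h1 (x1,x2) \<ge> m" and gM: "\<bar>fst (g (x1,x2))\<bar> \<le> M" using bd xb by auto
    have "D = - \<alpha> * P * h1 (x1,x2) + a * P * fst (g (x1,x2))"
    proof -
      have "(-x1) powr \<alpha> = a * P" using aP by (simp add: a_def)
      moreover have "(-x1) powr (\<alpha> - 1) = P" by (simp add: P_def a_def)
      ultimately show ?thesis unfolding D_def by simp
    qed
    also have "\<dots> \<le> - \<alpha> * P * m + a * P * M"
    proof -
      have "\<alpha> * P * m \<le> \<alpha> * P * h1 (x1,x2)" using h1m a1 Ppos by simp
      moreover have "a * P * fst (g (x1,x2)) \<le> a * P * M"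
        using gM apos Ppos by (intro mult_left_mono) auto
      ultimately show ?thesis by linarith
    qed
    also have "\<dots> = P * (a * M - \<alpha> * m)" by (simp add: algebra_simps)
    also have "\<dots> \<le> P * (- c2)" using aM Ppos by (intro mult_left_mono) (auto simp: c2_def)
    finally have DP: "D \<le> - c2 * P" by (simp add: mult.commute)
    have "\<beta> powr (1 - 1/\<alpha>) = b powr (\<alpha> - 1)"
      using a1 \<beta> by (simp add: b_def powr_powr field_simps)
    also have "\<dots> \<le> P" unfolding P_def using a bpos a1 by (intro powr_mono2) auto
    finally have "c2 * \<beta> powr (1 - 1/\<alpha>) \<le> c2 * P" using c2 by simp
    thus ?thesis using pD DP by linarith
  qed
  show ?thesis using main r b0 c2 by (intro exI[of _ "r/4"] exI[of _ \<beta>0] exI[of _ c2]) auto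
qed

lemma cos_le_half: assumes "pi - pi/3 \<le> t" "t \<le> pi + pi/3" shows "cos t \<le> -1/2"
proof -
  have ab: "\<bar>t - pi\<bar> \<le> pi/3" unfolding abs_le_iff using assms by linarith
  have "cos (\<bar>t - pi\<bar>) \<ge> cos (pi/3)"
    using ab pi_gt_zero by (intro cos_monotone_0_pi_le) auto
  moreover have "cos (\<bar>t - pi\<bar>) = - cos t" by (simp add: cos_diff)
  ultimately show ?thesis using cos_60 by simp
qed

lemma caseII:
  fixes h0 h1 :: "real \<times> real \<Rightarrow> real" and \<alpha> :: real
  assumes a1: "1 \<le> \<alpha>" and W: "open W" "(0,0) \<in> W" "C1_closure W h1"
    "\<forall>x\<in>closure W. h1 x > 0"
    and eq: "\<forall>x\<in>W. h0 x = norm x powr \<alpha> * h1 x"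
  shows "\<exists>\<theta>0 c2 \<beta>0. 0 < \<theta>0 \<and> \<theta>0 < pi/2 \<and> c2 > 0 \<and> \<beta>0 > 0 \<and>
               (\<forall>\<beta>. 0 < \<beta> \<and> \<beta> \<le> \<beta>0 \<longrightarrow>
                  (\<forall>x\<in>Bp \<alpha> \<theta>0 \<beta>. partial1 h0 x \<le> - c2 * \<beta> powr (1 - 1/\<alpha>)))"
proof -
  obtain r m M g where r: "r>0" and m: "m>0" and M: "M>0" and rW: "ball 0 r \<subseteq> W"
    and bd: "\<forall>x\<in>ball 0 r. h1 x \<ge> m \<and> \<bar>fst (g x)\<bar> \<le> M"
    and gd: "\<forall>x\<in>W. (h1 has_derivative (\<lambda>v. g x \<bullet> v)) (at x)"
    using local_bounds[OF W] by blast
  define s where "s = min (r/4) (\<alpha>*m/(8*M))"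
  have s: "s > 0" using r m M a1 by (simp add: s_def)
  define \<beta>0 where "\<beta>0 = s powr \<alpha>"
  have b0: "\<beta>0 > 0" using s by (simp add: \<beta>0_def)
  define c2 where "c2 = \<alpha>*m/4"
  have c2: "c2 > 0" using a1 m by (simp add: c2_def)
  have main: "partial1 h0 x \<le> - c2 * \<beta> powr (1 - 1/\<alpha>)"
    if \<beta>: "0 < \<beta>" "\<beta> \<le> \<beta>0" and x: "x \<in> Bp \<alpha> (pi/3) \<beta>" for \<beta> x
  proof -
    obtain x1 x2 where xx: "x = (x1, x2)" by (cases x)
    define b where "b = \<beta> powr (1/\<alpha>)"
    have bpos: "b > 0" using \<beta> by (simp add: b_def)
    have "b \<le> \<beta>0 powr (1/\<alpha>)" unfolding b_def using \<beta> a1 by (intro powr_mono2) auto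
    also have "\<beta>0 powr (1/\<alpha>) = s" using a1 s by (simp add: \<beta>0_def powr_powr)
    finally have bs: "b \<le> s" .
    define \<rho> where "\<rho> = norm x"
    obtain \<theta> where th: "pi - pi/3 \<le> \<theta>" "\<theta> \<le> pi + pi/3" and xr: "x = (\<rho> * cos \<theta>, \<rho> * sin \<theta>)"
      and rb: "b \<le> \<rho>" "\<rho> \<le> 2 * b"
      using x unfolding Bp_def b_def \<rho>_def by blast
    have rpos: "\<rho> > 0" using rb bpos by linarith
    have x1: "x1 \<le> - \<rho>/2"
    proof -
      have "x1 = \<rho> * cos \<theta>" using xr xx by simp
      also have "\<dots> \<le> \<rho> * (-1/2)" using cos_le_half[OF th] rpos by (intro mult_left_mono) auto
      finally show ?thesis by simp
    qed
    have "\<rho> \<le> 2 * s" using rb bs by linarith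
    hence "\<rho> * M \<le> 2 * s * M" using M by (intro mult_right_mono) auto
    also have "2 * s * M \<le> 2 * (\<alpha>*m/(8*M)) * M" using M unfolding s_def
      by (intro mult_right_mono) auto
    also have "2 * (\<alpha>*m/(8*M)) * M = \<alpha>*m/4" using M by (simp add: field_simps)
    finally have rM: "\<rho> * M \<le> \<alpha>*m/4" .
    have rr: "\<rho> < r" using \<open>\<rho> \<le> 2 * s\<close> s_def r by linarith
    have xb: "(x1, x2) \<in> ball 0 r" using rr by (simp add: \<rho>_def xx)
    define R where "R = x1^2 + x2^2"
    have rR: "\<rho> = sqrt R" by (simp add: \<rho>_def xx R_def norm_Pair)
    have Rpos: "R > 0" using rR rpos by auto
    define S :: "real set" where "S = {t. (t, x2) \<in> ball 0 r}"
    have Sopen: "open S" unfolding S_def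
    proof -
      have op: "open ((\<lambda>t. (t, x2)) -` ball 0 r)"
        by (rule open_vimage) (auto intro!: continuous_intros)
      have eqs: "{t::real. (t, x2) \<in> ball 0 r} = (\<lambda>t. (t, x2)) -` ball 0 r" by auto
      show "open {t::real. (t, x2) \<in> ball 0 r}" using op by (simp only: eqs)
    qed
    have x1S: "x1 \<in> S" using xb by (simp add: S_def)
    have hd: "((\<lambda>t. h1 (t, x2)) has_real_derivative fst (g (x1,x2))) (at x1)"
      using partial_deriv_h1 gd xb rW by blast
    have pd: "((\<lambda>t. (t^2 + x2^2) powr (\<alpha>/2)) has_real_derivative (\<alpha>/2) * R powr (\<alpha>/2 - 1) * (2*x1)) (at x1)"
      using DERIV_fun_powr[of "\<lambda>t. t^2 + x2^2" "2*x1" x1 "\<alpha>/2"] Rpos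
      by (auto simp: R_def intro!: derivative_eq_intros)
    define Q where "Q = R powr (\<alpha>/2 - 1)"
    define D where "D = (\<alpha>/2) * Q * (2*x1) * h1 (x1,x2) + R powr (\<alpha>/2) * fst (g (x1,x2))"
    have "((\<lambda>t. (t^2 + x2^2) powr (\<alpha>/2) * h1 (t, x2)) has_real_derivative D) (at x1)"
      unfolding D_def Q_def R_def using DERIV_mult[OF pd hd] by (simp add: R_def mult.commute)
    moreover have "(t^2 + x2^2) powr (\<alpha>/2) * h1 (t, x2) = h0 (t, x2)" if "t \<in> S" for t
    proof -
      have "norm (t, x2) powr \<alpha> = (t^2 + x2^2) powr (\<alpha>/2)"
        by (simp add: norm_Pair powr_half_sqrt[symmetric] powr_powr)
      thus ?thesis using eq rW that by (auto simp: S_def)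
    qed
    ultimately have "((\<lambda>t. h0 (t, x2)) has_real_derivative D) (at x1)"
      by (rule has_field_derivative_transform_within_open[OF _ Sopen x1S])
    hence pD: "partial1 h0 x = D" by (simp add: partial1_def xx DERIV_imp_deriv)
    have Qpos: "Q > 0" using Rpos by (simp add: Q_def)
    have RQ: "R powr (\<alpha>/2) = R * Q"
    proof -
      have "R powr (\<alpha>/2) = R powr (1 + (\<alpha>/2 - 1))" by simp
      also have "\<dots> = R powr 1 * R powr (\<alpha>/2 - 1)" by (rule powr_add)
      finally show ?thesis using Rpos by (simp add: Q_def)
    qed
    have RR: "R = \<rho> * \<rho>" using rR Rpos by simp
    have h1m: "h1 (x1,x2) \<ge> m" and gM: "\<bar>fst (g (x1,x2))\<bar> \<le> M" using bd xb by auto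
    have "D = \<alpha> * Q * x1 * h1 (x1,x2) + R * Q * fst (g (x1,x2))"
      by (simp add: D_def RQ)
    also have "\<dots> \<le> \<alpha> * Q * (-\<rho>/2) * m + R * Q * M"
    proof -
      have "\<alpha> * Q * x1 * h1 (x1,x2) \<le> \<alpha> * Q * (-\<rho>/2) * h1 (x1,x2)"
        using x1 a1 Qpos h1m m by (intro mult_right_mono mult_left_mono) auto
      also have "\<dots> \<le> \<alpha> * Q * (-\<rho>/2) * m"
        using h1m a1 Qpos rpos by (intro mult_left_mono_neg) (auto simp: mult_nonneg_nonneg)
      finally have A: "\<alpha> * Q * x1 * h1 (x1,x2) \<le> \<alpha> * Q * (-\<rho>/2) * m" .
      have "R * Q * fst (g (x1,x2)) \<le> R * Q * M"
        using gM Rpos Qpos by (intro mult_left_mono) auto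
      with A show ?thesis by linarith
    qed
    also have "\<dots> = \<rho> * Q * (\<rho> * M - \<alpha> * m / 2)" by (simp add: RR algebra_simps)
    also have "\<dots> \<le> \<rho> * Q * (- c2)" using rM Qpos rpos by (intro mult_left_mono) (auto simp: c2_def)
    finally have DP: "D \<le> - c2 * (\<rho> * Q)" by (simp add: mult.commute)
    have rQ: "\<rho> * Q = R powr ((\<alpha> - 1)/2)"
      using Rpos by (simp add: rR Q_def powr_half_sqrt[symmetric] powr_add[symmetric] field_simps)
    have bb: "b * b = \<beta> powr (2/\<alpha>)" using \<beta> by (simp add: b_def powr_add[symmetric])
    have ex: "1 - 1/\<alpha> = (2/\<alpha>) * ((\<alpha> - 1)/2)" using a1 by (simp add: field_simps)
    have "\<beta> powr (1 - 1/\<alpha>) = (b * b) powr ((\<alpha> - 1)/2)"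
      unfolding bb powr_powr ex ..
    also have "\<dots> \<le> R powr ((\<alpha> - 1)/2)" using RR rb bpos a1
      by (intro powr_mono2) (auto intro: mult_mono)
    finally have "c2 * \<beta> powr (1 - 1/\<alpha>) \<le> c2 * (\<rho> * Q)" using c2 rQ by simp
    thus ?thesis using pD DP by linarith
  qed
  have "0 < pi/3" "pi/3 < pi/2" using pi_gt_zero by auto
  then show ?thesis using main b0 c2 by (intro exI[of _ "pi/3"] exI[of _ c2] exI[of _ \<beta>0]) auto
qed


theorem lemma3p3:
  fixes \<Omega> :: "(real \<times> real) set" and h0 :: "real \<times> real \<Rightarrow> real" and \<alpha> :: real
  assumes "open \<Omega>" "bounded \<Omega>" "C1_boundary \<Omega>" "(0,0) \<in> \<Omega>"
    and "C1_closure \<Omega> h0"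
    and "\<forall>x\<in>closure \<Omega>. 0 \<le> h0 x" and "h0 (0,0) = 0"
  shows "((\<forall>x2. (0, x2) \<in> \<Omega> \<longrightarrow> h0 (0, x2) = 0) \<and>
          (\<forall>x1 x2. (x1, x2) \<in> \<Omega> \<and> x1 \<noteq> 0 \<longrightarrow> h0 (x1, x2) > 0) \<and>
          1 \<le> \<alpha> \<and>
          (\<exists>W h1. open W \<and> (0,0) \<in> W \<and> C1_closure W h1 \<and>
             (\<forall>x\<in>closure W. h1 x > 0) \<and>
             (\<forall>x1 x2. (x1, x2) \<in> W \<longrightarrow> h0 (x1, x2) = \<bar>x1\<bar> powr \<alpha> * h1 (x1, x2)))
         \<longrightarrow> (\<exists>\<delta> \<beta>0 c2. \<delta> > 0 \<and> \<beta>0 > 0 \<and> c2 > 0 \<and>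
               (\<forall>\<beta>. 0 < \<beta> \<and> \<beta> \<le> \<beta>0 \<longrightarrow>
                  (\<forall>x\<in>Bl \<alpha> \<delta> \<beta>. partial1 h0 x \<le> - c2 * \<beta> powr (1 - 1/\<alpha>)))))
       \<and> ((\<forall>x\<in>\<Omega>. x \<noteq> (0,0) \<longrightarrow> h0 x > 0) \<and>
          1 \<le> \<alpha> \<and>
          (\<exists>W h1. open W \<and> (0,0) \<in> W \<and> C1_closure W h1 \<and>
             (\<forall>x\<in>closure W. h1 x > 0) \<and>
             (\<forall>x\<in>W. h0 x = norm x powr \<alpha> * h1 x))
         \<longrightarrow> (\<exists>\<theta>0 c2 \<beta>0. 0 < \<theta>0 \<and> \<theta>0 < pi/2 \<and> c2 > 0 \<and> \<beta>0 > 0 \<and>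
               (\<forall>\<beta>. 0 < \<beta> \<and> \<beta> \<le> \<beta>0 \<longrightarrow>
                  (\<forall>x\<in>Bp \<alpha> \<theta>0 \<beta>. partial1 h0 x \<le> - c2 * \<beta> powr (1 - 1/\<alpha>)))))"
  proof (intro conjI impI)
  assume h: "(\<forall>x2. (0, x2) \<in> \<Omega> \<longrightarrow> h0 (0, x2) = 0) \<and>
          (\<forall>x1 x2. (x1, x2) \<in> \<Omega> \<and> x1 \<noteq> 0 \<longrightarrow> h0 (x1, x2) > 0) \<and>
          1 \<le> \<alpha> \<and>
          (\<exists>W h1. open W \<and> (0,0) \<in> W \<and> C1_closure W h1 \<and>
             (\<forall>x\<in>closure W. h1 x > 0) \<and>
             (\<forall>x1 x2. (x1, x2) \<in> W \<longrightarrow> h0 (x1, x2) = \<bar>x1\<bar> powr \<alpha> * h1 (x1, x2)))"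
  then obtain W h1 where WW: "open W" "(0,0) \<in> W" "C1_closure W h1" "\<forall>x\<in>closure W. h1 x > 0"
    "\<forall>x1 x2. (x1, x2) \<in> W \<longrightarrow> h0 (x1, x2) = \<bar>x1\<bar> powr \<alpha> * h1 (x1, x2)" by blast
  have a1: "1 \<le> \<alpha>" using h by blast
  show "\<exists>\<delta> \<beta>0 c2. \<delta> > 0 \<and> \<beta>0 > 0 \<and> c2 > 0 \<and>
               (\<forall>\<beta>. 0 < \<beta> \<and> \<beta> \<le> \<beta>0 \<longrightarrow>
                  (\<forall>x\<in>Bl \<alpha> \<delta> \<beta>. partial1 h0 x \<le> - c2 * \<beta> powr (1 - 1/\<alpha>)))"
    by (rule caseI[OF a1 WW])
next
  assume h: "(\<forall>x\<in>\<Omega>. x \<noteq> (0,0) \<longrightarrow> h0 x > 0) \<and>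
          1 \<le> \<alpha> \<and>
          (\<exists>W h1. open W \<and> (0,0) \<in> W \<and> C1_closure W h1 \<and>
             (\<forall>x\<in>closure W. h1 x > 0) \<and>
             (\<forall>x\<in>W. h0 x = norm x powr \<alpha> * h1 x))"
  then obtain W h1 where WW: "open W" "(0,0) \<in> W" "C1_closure W h1" "\<forall>x\<in>closure W. h1 x > 0"
    "\<forall>x\<in>W. h0 x = norm x powr \<alpha> * h1 x" by blast
  have a1: "1 \<le> \<alpha>" using h by blast
  show "\<exists>\<theta>0 c2 \<beta>0. 0 < \<theta>0 \<and> \<theta>0 < pi/2 \<and> c2 > 0 \<and> \<beta>0 > 0 \<and>
               (\<forall>\<beta>. 0 < \<beta> \<and> \<beta> \<le> \<beta>0 \<longrightarrow>
                  (\<forall>x\<in>Bp \<alpha> \<theta>0 \<beta>. partial1 h0 x \<le> - c2 * \<beta> powr (1 - 1/\<alpha>)))"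
    by (rule caseII[OF a1 WW])
qed

end
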